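(* Let $\mathcal P$ be a σ-convex, pre-Hahn-localizable family of probability measures on $(\Omega,\mathcal F)$, with localization $\mathcal Q$ and supports $\{S_Q\}_{Q\in\mathcal Q}$. The following are equivalent: (1) $\mathcal P$ is Hahn-localizable (with respect to $\mathcal Q$ and $\{S_Q\}$); (2) $\mathbb L^\infty(\mathcal P)$, ordered by $f\le g$ iff $f\le g$ $\mathcal P$-q.s., is Dedekind complete; (3) for every $\mathcal P$-q.s. uniformly bounded family $\{g_Q\}_{Q\in\mathcal Q}$ of non-negative $\mathcal F$-measurable functions with $g_Q=0$ $\mathcal P$-q.s. on $\Omega\setminus S_Q$, there is $g\in\mathcal L^\infty(\mathcal P)$ with $g\mathbf 1_{S_Q}=g_Q\mathbf 1_{S_Q}$ $\mathcal P$-q.s. for every $Q\in\mathcal Q$.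
   Context: $\mathcal P$ is σ-convex if it is closed under countable convex combinations. A set is $\mathcal P$-polar if contained in some $N\in\mathcal F$ with $P(N)=0$ for all $P\in\mathcal P$; $\mathcal P$-q.s. means outside a polar set. $\mathcal L^\infty(\mathcal P)$ is the set of $\mathcal F$-measurable real functions bounded $\mathcal P$-q.s.; $\mathbb L^\infty(\mathcal P)$ is its quotient by $\mathcal P$-q.s. equality. Dedekind complete: every nonempty subset bounded above has a least upper bound. $\mathcal P\lll\mathcal Q$ means each $P\in\mathcal P$ is absolutely continuous w.r.t. some $Q\in\mathcal Q$; $\mathrm{sconv}(\mathcal Q)$ denotes countable convex combinations. $\mathcal P$ is pre-Hahn-localizable with localization $\mathcal Q$ (probability measures on $\mathcal F$) and supports $S_Q\in\mathcal F$ if $Q(S_R)=\delta_{QR}$ for $Q,R\in\mathcal Q$ and $\mathcal Q\lll\mathcal P\lll\mathrm{sconv}(\mathcal Q)$. It is Hahn-localizable (w.r.t. $\mathcal Q$, $\{S_Q\}$) if for every family $E_Q\in\mathcal F$, $E_Q\subseteq S_Q$, there is $S\in\mathcal F$ with $Q(E_Q\setminus S)=0$ for all $Q\in\mathcal Q$, and such that any $F\in\mathcal F$ with $Q(E_Q\setminus F)=0$ for all $Q$ satisfies $Q(S\setminus F)=0$ for all $Q$. *)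

theory Defs
  imports "HOL-Probability.Probability"
begin

text \<open>The measurable space (\<Omega>, F) is represented by a measure M; only space M and sets M matter.\<close>

definition prob_on :: "'a measure \<Rightarrow> 'a measure \<Rightarrow> bool" where
  "prob_on M P \<longleftrightarrow> prob_space P \<and> sets P = sets M"

definition sconv_comb :: "'a measure \<Rightarrow> (nat \<Rightarrow> real) \<Rightarrow> (nat \<Rightarrow> 'a measure) \<Rightarrow> 'a measure" where
  "sconv_comb M \<alpha> Ps =
     measure_of (space M) (sets M) (\<lambda>A. \<Sum>n. ennreal (\<alpha> n) * emeasure (Ps n) A)"

definition cc_weights :: "(nat \<Rightarrow> real) \<Rightarrow> bool" where
  "cc_weights \<alpha> \<longleftrightarrow> (\<forall>n. 0 \<le> \<alpha> n) \<and> \<alpha> sums 1"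

definition sigma_convex :: "'a measure \<Rightarrow> 'a measure set \<Rightarrow> bool" where
  "sigma_convex M \<P> \<longleftrightarrow>
     (\<forall>\<alpha> Ps. cc_weights \<alpha> \<and> range Ps \<subseteq> \<P> \<longrightarrow> sconv_comb M \<alpha> Ps \<in> \<P>)"

definition sconv :: "'a measure \<Rightarrow> 'a measure set \<Rightarrow> 'a measure set" where
  "sconv M \<Q> = {sconv_comb M \<alpha> Qs | \<alpha> Qs. cc_weights \<alpha> \<and> range Qs \<subseteq> \<Q>}"

definition polar :: "'a measure \<Rightarrow> 'a measure set \<Rightarrow> 'a set \<Rightarrow> bool" where
  "polar M \<P> A \<longleftrightarrow> (\<exists>N\<in>sets M. A \<subseteq> N \<and> (\<forall>P\<in>\<P>. emeasure P N = 0))"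

definition qs :: "'a measure \<Rightarrow> 'a measure set \<Rightarrow> ('a \<Rightarrow> bool) \<Rightarrow> bool" where
  "qs M \<P> \<phi> \<longleftrightarrow> polar M \<P> {\<omega>\<in>space M. \<not> \<phi> \<omega>}"

definition dominated_by :: "'a measure set \<Rightarrow> 'a measure set \<Rightarrow> bool" where
  "dominated_by \<P> \<Q> \<longleftrightarrow> (\<forall>P\<in>\<P>. \<exists>Q\<in>\<Q>. absolutely_continuous Q P)"

definition pre_hahn_localizable ::
  "'a measure \<Rightarrow> 'a measure set \<Rightarrow> 'a measure set \<Rightarrow> ('a measure \<Rightarrow> 'a set) \<Rightarrow> bool" where
  "pre_hahn_localizable M \<P> \<Q> S \<longleftrightarrow>
     (\<forall>Q\<in>\<Q>. prob_on M Q \<and> S Q \<in> sets M) \<and>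
     (\<forall>Q\<in>\<Q>. \<forall>R\<in>\<Q>. emeasure Q (S R) = (if Q = R then 1 else 0)) \<and>
     dominated_by \<Q> \<P> \<and> dominated_by \<P> (sconv M \<Q>)"

definition hahn_localizable ::
  "'a measure \<Rightarrow> 'a measure set \<Rightarrow> 'a measure set \<Rightarrow> ('a measure \<Rightarrow> 'a set) \<Rightarrow> bool" where
  "hahn_localizable M \<P> \<Q> S \<longleftrightarrow>
     pre_hahn_localizable M \<P> \<Q> S \<and>
     (\<forall>E. (\<forall>Q\<in>\<Q>. E Q \<in> sets M \<and> E Q \<subseteq> S Q) \<longrightarrow>
        (\<exists>T\<in>sets M. (\<forall>Q\<in>\<Q>. emeasure Q (E Q - T) = 0) \<and>
           (\<forall>F\<in>sets M. (\<forall>Q\<in>\<Q>. emeasure Q (E Q - F) = 0) \<longrightarrow>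
              (\<forall>Q\<in>\<Q>. emeasure Q (T - F) = 0))))"

definition Linf :: "'a measure \<Rightarrow> 'a measure set \<Rightarrow> ('a \<Rightarrow> real) set" where
  "Linf M \<P> = {f. f \<in> borel_measurable M \<and> (\<exists>c. qs M \<P> (\<lambda>\<omega>. \<bar>f \<omega>\<bar> \<le> c))}"

text \<open>Order on \<L>^\<infinity>: f \<le> g \<P>-q.s. (the order of the quotient \<bar>L^\<infinity>, lifted to representatives).\<close>
definition qs_le :: "'a measure \<Rightarrow> 'a measure set \<Rightarrow> ('a \<Rightarrow> real) \<Rightarrow> ('a \<Rightarrow> real) \<Rightarrow> bool" where
  "qs_le M \<P> f g \<longleftrightarrow> qs M \<P> (\<lambda>\<omega>. f \<omega> \<le> g \<omega>)"

text \<open>Dedekind completeness of \<bar>L^\<infinity>(\<P>), stated on representatives: every nonempty subset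
  bounded above in \<L>^\<infinity> has a least upper bound in \<L>^\<infinity> (unique up to q.s. equality).\<close>
definition Linf_dedekind_complete :: "'a measure \<Rightarrow> 'a measure set \<Rightarrow> bool" where
  "Linf_dedekind_complete M \<P> \<longleftrightarrow>
     (\<forall>A. A \<subseteq> Linf M \<P> \<and> A \<noteq> {} \<and> (\<exists>u\<in>Linf M \<P>. \<forall>f\<in>A. qs_le M \<P> f u) \<longrightarrow>
        (\<exists>s\<in>Linf M \<P>. (\<forall>f\<in>A. qs_le M \<P> f s) \<and>
           (\<forall>u\<in>Linf M \<P>. (\<forall>f\<in>A. qs_le M \<P> f u) \<longrightarrow> qs_le M \<P> s u)))"

end

theory Submission
  imports Defs
begin

lemma aux_ineq: "(a::real) = b + c \<Longrightarrow> a \<le> m \<Longrightarrow> c \<le> m - b" by linarith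

lemma ess_union:
  assumes fm: "finite_measure Q" and E: "\<E> \<subseteq> sets Q"
  shows "\<exists>G::nat \<Rightarrow> 'a set. range G \<subseteq> insert {} \<E> \<and> (\<forall>E\<in>\<E>. E - \<Union>(range G) \<in> null_sets Q)"
proof -
  interpret finite_measure Q by fact
  define V where "V = {measure Q (\<Union>(range F)) | F::nat \<Rightarrow> 'a set. range F \<subseteq> insert {} \<E>}"
  have Fsets: "\<Union>(range F) \<in> sets Q" if "range F \<subseteq> insert {} \<E>" for F :: "nat \<Rightarrow> 'a set"
    proof (intro sets.countable_UN'')
    fix x have "F x \<in> insert {} \<E>" using that by blast
    then show "F x \<in> sets Q" using E by auto
  qed simp
  have bdd: "bdd_above V" unfolding V_def
    by (rule bdd_aboveI[where M="measure Q (space Q)"]) (auto intro: bounded_measure)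
  have ne: "0 \<in> V" unfolding V_def by (auto intro!: exI[where x="\<lambda>_::nat. {}"])
  define m where "m = Sup V"
  have le_m: "measure Q (\<Union>(range F)) \<le> m" if "range F \<subseteq> insert {} \<E>" for F :: "nat \<Rightarrow> 'a set"
    unfolding m_def using that bdd by (intro cSup_upper) (auto simp: V_def)
  have "\<exists>F::nat \<Rightarrow> 'a set. range F \<subseteq> insert {} \<E> \<and> m - 1 / real (Suc n) < measure Q (\<Union>(range F))" for n
  proof -
    have "m - 1 / real (Suc n) < Sup V" unfolding m_def by simp
    then obtain v where "v \<in> V" "m - 1 / real (Suc n) < v"
      using less_cSup_iff[OF _ bdd] ne by blast
    then show ?thesis unfolding V_def by blast
  qed
  then obtain Fs :: "nat \<Rightarrow> nat \<Rightarrow> 'a set" where Fs: "\<And>n. range (Fs n) \<subseteq> insert {} \<E>"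
    "\<And>n. m - 1 / real (Suc n) < measure Q (\<Union>(range (Fs n)))" by metis
  define G where "G i = Fs (fst (prod_decode i)) (snd (prod_decode i))" for i
  have rG: "range G \<subseteq> insert {} \<E>" using Fs(1) unfolding G_def by blast
  have UG: "\<Union>(range (Fs n)) \<subseteq> \<Union>(range G)" for n
  proof
    fix x assume "x \<in> \<Union>(range (Fs n))"
    then obtain k where "x \<in> Fs n k" by auto
    moreover have "G (prod_encode (n, k)) = Fs n k" unfolding G_def by (simp only: prod_encode_inverse fst_conv snd_conv)
    ultimately have "x \<in> G (prod_encode (n, k))" by simp
    then show "x \<in> \<Union>(range G)" by blast
  qed
  have lowm: "m - 1 / real (Suc n) < measure Q (\<Union>(range G))" for n
    using Fs(2)[of n] finite_measure_mono[OF UG[of n] Fsets[OF rG]] by linarith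
  have "E - \<Union>(range G) \<in> null_sets Q" if "E \<in> \<E>" for E
  proof -
    define H where "H i = (case i of 0 \<Rightarrow> E | Suc j \<Rightarrow> G j)" for i
    have rH: "range H \<subseteq> insert {} \<E>"
    proof (rule subsetI)
      fix y assume "y \<in> range H"
      then obtain i where y: "y = H i" by auto
      show "y \<in> insert {} \<E>"
      proof (cases i)
        case 0 then show ?thesis using y that H_def by simp
      next
        case (Suc j) then have "y = G j" using y H_def by simp
        then show ?thesis using rG by blast
      qed
    qed
    have UH: "\<Union>(range H) = \<Union>(range G) \<union> E"
      unfolding H_def by (auto split: nat.splits)
    have eqU: "measure Q (\<Union>(range G) \<union> E) = measure Q (\<Union>(range G)) + measure Q (E - \<Union>(range G))"
      using Fsets[OF rG] that E by (intro finite_measure_Union') auto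
    have "measure Q (\<Union>(range G) \<union> E) \<le> m" using le_m[OF rH] unfolding UH .
    then have le: "measure Q (E - \<Union>(range G)) \<le> m - measure Q (\<Union>(range G))" by (rule aux_ineq[OF eqU])
    define d where "d = measure Q (E - \<Union>(range G))"
    have "d \<le> 0"
    proof (rule ccontr)
      assume "\<not> d \<le> 0"
      then have "0 < d" by simp
      from reals_Archimedean[OF this] obtain n where n: "inverse (real (Suc n)) < d" by blast
      have "d \<le> m - measure Q (\<Union>(range G))" using le unfolding d_def .
      moreover have "m - 1 / real (Suc n) < measure Q (\<Union>(range G))" by (rule lowm)
      ultimately show False using n unfolding inverse_eq_divide by linarith
    qed
    moreover have "0 \<le> d" unfolding d_def by (rule measure_nonneg)
    ultimately have d0: "measure Q (E - \<Union>(range G)) = 0" unfolding d_def by linarith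
    have Em: "E - \<Union>(range G) \<in> sets Q" using Fsets[OF rG] that E by auto
    have "emeasure Q (E - \<Union>(range G)) = 0" using emeasure_eq_measure[of "E - \<Union>(range G)"] d0 by simp
    then show ?thesis using Em by (rule null_setsI)
  qed
  with rG show ?thesis by blast
qed

locale setting =
  fixes M :: "'a measure" and \<P> \<Q> :: "'a measure set" and S :: "'a measure \<Rightarrow> 'a set"
  assumes probs: "\<forall>P\<in>\<P>. prob_on M P"
    and phl: "pre_hahn_localizable M \<P> \<Q> S"
begin

definition qz :: "'a set \<Rightarrow> bool" where
  "qz N \<longleftrightarrow> N \<in> sets M \<and> (\<forall>Q\<in>\<Q>. emeasure Q N = 0)"

definition qs' :: "('a \<Rightarrow> bool) \<Rightarrow> bool" where
  "qs' \<phi> \<longleftrightarrow> (\<exists>N. qz N \<and> (\<forall>\<omega>\<in>space M. \<omega> \<notin> N \<longrightarrow> \<phi> \<omega>))"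

lemma Q_prob: "Q \<in> \<Q> \<Longrightarrow> prob_space Q" and Q_sets: "Q \<in> \<Q> \<Longrightarrow> sets Q = sets M"
  and S_sets: "Q \<in> \<Q> \<Longrightarrow> S Q \<in> sets M"
  and S_self: "Q \<in> \<Q> \<Longrightarrow> emeasure Q (S Q) = 1"
  and S_other: "Q \<in> \<Q> \<Longrightarrow> R \<in> \<Q> \<Longrightarrow> Q \<noteq> R \<Longrightarrow> emeasure Q (S R) = 0"
  using phl unfolding pre_hahn_localizable_def prob_on_def by auto

lemma Q_space: "Q \<in> \<Q> \<Longrightarrow> space Q = space M"
  using Q_sets sets_eq_imp_space_eq by blast

lemma null_iff: "Q \<in> \<Q> \<Longrightarrow> X \<in> null_sets Q \<longleftrightarrow> X \<in> sets M \<and> emeasure Q X = 0"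
  using Q_sets by (auto simp: null_sets_def)

lemma compl_S_null: "Q \<in> \<Q> \<Longrightarrow> space M - S Q \<in> null_sets Q"
proof -
  assume Q: "Q \<in> \<Q>"
  interpret prob_space Q using Q_prob[OF Q] .
  have "emeasure Q (space Q - S Q) = emeasure Q (space Q) - emeasure Q (S Q)"
    using Q S_sets Q_sets by (intro emeasure_compl) auto
  then have "emeasure Q (space M - S Q) = 0" using S_self[OF Q] Q_space[OF Q] emeasure_space_1 by simp
  then show ?thesis using null_iff[OF Q] S_sets[OF Q] by auto
qed

lemma polar_iff: "polar M \<P> X \<longleftrightarrow> (\<exists>N. qz N \<and> X \<subseteq> N)"
proof
  assume "polar M \<P> X"
  then obtain N where N: "N \<in> sets M" "X \<subseteq> N" "\<forall>P\<in>\<P>. emeasure P N = 0" unfolding polar_def by auto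
  have "emeasure Q N = 0" if Q: "Q \<in> \<Q>" for Q
  proof -
    obtain P where P: "P \<in> \<P>" "absolutely_continuous P Q"
      using phl Q unfolding pre_hahn_localizable_def dominated_by_def by blast
    have "N \<in> null_sets P" using N P probs unfolding prob_on_def by (auto simp: null_sets_def)
    then have "N \<in> null_sets Q" using P(2) unfolding absolutely_continuous_def by auto
    then show ?thesis by auto
  qed
  then show "\<exists>N. qz N \<and> X \<subseteq> N" using N unfolding qz_def by auto
next
  assume "\<exists>N. qz N \<and> X \<subseteq> N"
  then obtain N where N: "N \<in> sets M" "X \<subseteq> N" "\<forall>Q\<in>\<Q>. emeasure Q N = 0" unfolding qz_def by auto
  have "emeasure P N = 0" if P: "P \<in> \<P>" for P
  proof -
    obtain Q' where Q': "Q' \<in> sconv M \<Q>" "absolutely_continuous Q' P"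
      using phl P unfolding pre_hahn_localizable_def dominated_by_def by blast
    then obtain \<alpha> Qs where Q'def: "Q' = sconv_comb M \<alpha> Qs" and rQ: "range Qs \<subseteq> \<Q>"
      unfolding sconv_def by auto
    have sQ': "sets Q' = sets M" unfolding Q'def sconv_comb_def
      by (simp add: sets_measure_of_conv sets.space_closed sets.sigma_sets_eq)
    have "\<forall>n. emeasure (Qs n) N = 0" using rQ N by auto
    then have "emeasure Q' N = 0"
      unfolding Q'def sconv_comb_def emeasure_measure_of_conv by simp
    then have "N \<in> null_sets Q'" using sQ' N by (auto simp: null_sets_def)
    then have "N \<in> null_sets P" using Q'(2) unfolding absolutely_continuous_def by auto
    then show ?thesis by auto
  qed
  then show "polar M \<P> X" using N unfolding polar_def by auto
qed

lemma qs_iff: "qs M \<P> \<phi> \<longleftrightarrow> qs' \<phi>"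
  unfolding qs_def polar_iff qs'_def by blast

lemma qz_empty: "qz {}" unfolding qz_def by auto

lemma qz_Un: "qz A \<Longrightarrow> qz B \<Longrightarrow> qz (A \<union> B)"
proof -
  assume A: "qz A" and B: "qz B"
  have "emeasure Q (A \<union> B) = 0" if Q: "Q \<in> \<Q>" for Q
  proof -
    have "A \<in> null_sets Q" "B \<in> null_sets Q" using A B null_iff[OF Q] Q unfolding qz_def by auto
    then have "A \<union> B \<in> null_sets Q" by auto
    then show ?thesis by auto
  qed
  then show ?thesis using A B unfolding qz_def by auto
qed

lemma qz_subset: "qz N \<Longrightarrow> X \<subseteq> N \<Longrightarrow> X \<in> sets M \<Longrightarrow> qz X"
proof -
  assume N: "qz N" and X: "X \<subseteq> N" "X \<in> sets M"
  have "emeasure Q X = 0" if Q: "Q \<in> \<Q>" for Q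
  proof -
    have "N \<in> null_sets Q" "X \<in> sets Q" using N X null_iff[OF Q] Q Q_sets[OF Q] unfolding qz_def by auto
    then have "X \<in> null_sets Q" using X null_sets_subset by blast
    then show ?thesis by auto
  qed
  then show ?thesis using X unfolding qz_def by auto
qed

lemma qz_UN: "countable I \<Longrightarrow> (\<And>i. i \<in> I \<Longrightarrow> qz (N i)) \<Longrightarrow> qz (\<Union>i\<in>I. N i)"
proof -
  assume I: "countable I" and N: "\<And>i. i \<in> I \<Longrightarrow> qz (N i)"
  have "emeasure Q (\<Union>i\<in>I. N i) = 0" if Q: "Q \<in> \<Q>" for Q
  proof -
    have "N i \<in> null_sets Q" if "i \<in> I" for i using N[OF that] null_iff[OF Q] Q unfolding qz_def by auto
    then have "(\<Union>i\<in>I. N i) \<in> null_sets Q" by (intro null_sets_UN'[OF I]) auto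
    then show ?thesis by auto
  qed
  moreover have "(\<Union>i\<in>I. N i) \<in> sets M" using N unfolding qz_def by (intro sets.countable_UN''[OF I]) auto
  ultimately show ?thesis unfolding qz_def by auto
qed

lemma qs'_conj: "qs' P1 \<Longrightarrow> qs' P2 \<Longrightarrow> qs' (\<lambda>\<omega>. P1 \<omega> \<and> P2 \<omega>)"
  unfolding qs'_def by (metis Un_iff qz_Un)

lemma qs'_mono: "qs' P1 \<Longrightarrow> (\<And>\<omega>. \<omega> \<in> space M \<Longrightarrow> P1 \<omega> \<Longrightarrow> P2 \<omega>) \<Longrightarrow> qs' P2"
  unfolding qs'_def by metis

lemma qs'_True: "(\<And>\<omega>. \<omega> \<in> space M \<Longrightarrow> P \<omega>) \<Longrightarrow> qs' P"
  unfolding qs'_def using qz_empty by blast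

lemma qs'_ball: "countable I \<Longrightarrow> (\<And>i. i \<in> I \<Longrightarrow> qs' (P i)) \<Longrightarrow> qs' (\<lambda>\<omega>. \<forall>i\<in>I. P i \<omega>)"
proof -
  assume I: "countable I" and P: "\<And>i. i \<in> I \<Longrightarrow> qs' (P i)"
  then obtain N where N: "\<And>i. i \<in> I \<Longrightarrow> qz (N i) \<and> (\<forall>\<omega>\<in>space M. \<omega> \<notin> N i \<longrightarrow> P i \<omega>)"
    unfolding qs'_def by metis
  show ?thesis unfolding qs'_def
    by (rule exI[where x="\<Union>i\<in>I. N i"]) (use N qz_UN[OF I, of N] in auto)
qed

lemma qz_set: "X \<in> sets M \<Longrightarrow> qs' (\<lambda>\<omega>. \<omega> \<notin> X) \<Longrightarrow> qz X"
  unfolding qs'_def using qz_subset sets.sets_into_space by (metis subsetI subset_iff)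

lemma qz_null: "qz N \<Longrightarrow> Q \<in> \<Q> \<Longrightarrow> N \<in> null_sets Q"
  unfolding qz_def using null_iff by auto

lemma set_complete:
  assumes HL: "hahn_localizable M \<P> \<Q> S" and E: "\<E> \<subseteq> sets M"
  shows "\<exists>T\<in>sets M. (\<forall>E\<in>\<E>. qz (E - T)) \<and> (\<forall>F\<in>sets M. (\<forall>E\<in>\<E>. qz (E - F)) \<longrightarrow> qz (T - F))"
proof -
  define P where "P Q G \<longleftrightarrow> range G \<subseteq> insert {} ((\<lambda>E. E \<inter> S Q) ` \<E>) \<and>
     (\<forall>X\<in>(\<lambda>E. E \<inter> S Q) ` \<E>. X - \<Union>(range G) \<in> null_sets Q)" for Q and G :: "nat \<Rightarrow> 'a set"
  have ex: "\<exists>G. P Q G" if Q: "Q \<in> \<Q>" for Q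
    unfolding P_def
  proof (rule ess_union)
    show "finite_measure Q" using Q_prob[OF Q] by (simp add: prob_space_def)
    show "(\<lambda>E. E \<inter> S Q) ` \<E> \<subseteq> sets Q" using E S_sets[OF Q] Q_sets[OF Q] by auto
  qed
  define G where "G Q = (SOME G. P Q G)" for Q
  have GP: "P Q (G Q)" if Q: "Q \<in> \<Q>" for Q
    unfolding G_def by (rule someI_ex[OF ex[OF Q]])
  have G: "\<And>Q. Q \<in> \<Q> \<Longrightarrow> range (G Q) \<subseteq> insert {} ((\<lambda>E. E \<inter> S Q) ` \<E>)"
    "\<And>Q. Q \<in> \<Q> \<Longrightarrow> \<forall>X\<in>(\<lambda>E. E \<inter> S Q) ` \<E>. X - \<Union>(range (G Q)) \<in> null_sets Q"
    using GP unfolding P_def by auto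
  define EQ where "EQ Q = \<Union>(range (G Q))" for Q
  have EQ: "EQ Q \<in> sets M \<and> EQ Q \<subseteq> S Q" if Q: "Q \<in> \<Q>" for Q
  proof
    have "G Q i \<in> sets M \<and> G Q i \<subseteq> S Q" for i
    proof -
      have "G Q i \<in> insert {} ((\<lambda>E. E \<inter> S Q) ` \<E>)" using G(1)[OF Q] by blast
      then show ?thesis using E S_sets[OF Q] by auto
    qed
    then show "EQ Q \<in> sets M" "EQ Q \<subseteq> S Q" unfolding EQ_def by (auto intro: sets.countable_UN'')
  qed
  from HL EQ obtain T where T: "T \<in> sets M" "\<forall>Q\<in>\<Q>. emeasure Q (EQ Q - T) = 0"
    "\<forall>F\<in>sets M. (\<forall>Q\<in>\<Q>. emeasure Q (EQ Q - F) = 0) \<longrightarrow> (\<forall>Q\<in>\<Q>. emeasure Q (T - F) = 0)"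
    unfolding hahn_localizable_def by blast
  have a: "qz (E - T)" if e: "E \<in> \<E>" for E
  proof -
    have "emeasure Q (E - T) = 0" if Q: "Q \<in> \<Q>" for Q
    proof -
      have n1: "space M - S Q \<in> null_sets Q" by (rule compl_S_null[OF Q])
      have n2: "E \<inter> S Q - EQ Q \<in> null_sets Q" using G(2)[OF Q] e unfolding EQ_def by auto
      have n3: "EQ Q - T \<in> null_sets Q" using T EQ[OF Q] null_iff[OF Q] Q by auto
      have "(space M - S Q) \<union> (E \<inter> S Q - EQ Q) \<union> (EQ Q - T) \<in> null_sets Q" using n1 n2 n3 by auto
      moreover have "E - T \<subseteq> (space M - S Q) \<union> (E \<inter> S Q - EQ Q) \<union> (EQ Q - T)"
        using E e sets.sets_into_space by blast
      moreover have "E - T \<in> sets Q" using E e T Q_sets[OF Q] by auto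
      ultimately have "E - T \<in> null_sets Q" using null_sets_subset by blast
      then show ?thesis by auto
    qed
    then show ?thesis using E e T unfolding qz_def by auto
  qed
  have b: "qz (T - F)" if F: "F \<in> sets M" "\<forall>E\<in>\<E>. qz (E - F)" for F
  proof -
    have "emeasure Q (EQ Q - F) = 0" if Q: "Q \<in> \<Q>" for Q
    proof -
      have "G Q i - F \<in> null_sets Q" for i
      proof -
        have "G Q i \<in> insert {} ((\<lambda>E. E \<inter> S Q) ` \<E>)" using G(1)[OF Q] by blast
        then consider "G Q i = {}" | E where "E \<in> \<E>" "G Q i = E \<inter> S Q" by auto
        then show ?thesis
        proof cases
          case 2
          have "E - F \<in> null_sets Q" using F(2) 2(1) qz_null Q by auto
          moreover have "G Q i - F \<in> sets Q" using 2 E S_sets[OF Q] F Q_sets[OF Q] by auto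
          ultimately show ?thesis using 2 null_sets_subset[of "E - F" Q "G Q i - F"] by auto
        qed simp
      qed
      then have "(\<Union>i. G Q i - F) \<in> null_sets Q" by (intro null_sets_UN) auto
      moreover have "(\<Union>i. G Q i - F) = EQ Q - F" unfolding EQ_def by auto
      ultimately show ?thesis by auto
    qed
    then have "\<forall>Q\<in>\<Q>. emeasure Q (T - F) = 0" using T(3) F by blast
    then show ?thesis using T F unfolding qz_def by auto
  qed
  show ?thesis using a b T(1) by blast
qed

lemma qs_le_iff: "qs_le M \<P> f g \<longleftrightarrow> qs' (\<lambda>\<omega>. f \<omega> \<le> g \<omega>)"
  unfolding qs_le_def qs_iff ..

lemma Linf_iff: "f \<in> Linf M \<P> \<longleftrightarrow> f \<in> borel_measurable M \<and> (\<exists>c. qs' (\<lambda>\<omega>. \<bar>f \<omega>\<bar> \<le> c))"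
  unfolding Linf_def qs_iff by simp

lemma HL_DC:
  assumes HL: "hahn_localizable M \<P> \<Q> S"
  shows "Linf_dedekind_complete M \<P>"
  unfolding Linf_dedekind_complete_def
proof (intro allI impI)
  fix A assume "A \<subseteq> Linf M \<P> \<and> A \<noteq> {} \<and> (\<exists>u\<in>Linf M \<P>. \<forall>f\<in>A. qs_le M \<P> f u)"
  then obtain f0 u where AL: "A \<subseteq> Linf M \<P>" and f0: "f0 \<in> A" and u: "u \<in> Linf M \<P>"
    and fu: "\<And>f. f \<in> A \<Longrightarrow> qs' (\<lambda>\<omega>. f \<omega> \<le> u \<omega>)" by (auto simp: qs_le_iff)
  obtain c0 where c0: "qs' (\<lambda>\<omega>. \<bar>f0 \<omega>\<bar> \<le> c0)" using AL f0 Linf_iff by blast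
  obtain cu where cu: "qs' (\<lambda>\<omega>. \<bar>u \<omega>\<bar> \<le> cu)" using u Linf_iff by blast
  define L where "L = - c0"
  define K where "K = cu + 1"
  have meas: "f \<in> borel_measurable M" if "f \<in> A" for f using AL that Linf_iff by blast
  define \<E> where "\<E> r = (\<lambda>f. {\<omega>\<in>space M. r < f \<omega>}) ` A" for r :: real
  have "\<E> r \<subseteq> sets M" for r unfolding \<E>_def using meas by auto
  then have "\<exists>T\<in>sets M. (\<forall>E\<in>\<E> r. qz (E - T)) \<and> (\<forall>F\<in>sets M. (\<forall>E\<in>\<E> r. qz (E - F)) \<longrightarrow> qz (T - F))" for r
    using set_complete[OF HL] by blast
  then obtain T where T: "\<And>r. T r \<in> sets M" "\<And>r. \<forall>E\<in>\<E> r. qz (E - T r)"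
    "\<And>r. \<forall>F\<in>sets M. (\<forall>E\<in>\<E> r. qz (E - F)) \<longrightarrow> qz (T r - F)" by metis
  define F where "F r \<omega> = (if \<omega> \<in> T r then max L (min r K) else L)" for r \<omega>
  define s where "s \<omega> = (SUP r\<in>\<rat>. F r \<omega>)" for \<omega>
  have Fle: "F r \<omega> \<le> max L K" for r \<omega> unfolding F_def by auto
  have bdd: "bdd_above ((\<lambda>r. F r \<omega>) ` \<rat>)" for \<omega> using Fle by (intro bdd_aboveI[where M="max L K"]) auto
  have Rne: "(\<rat>::real set) \<noteq> {}" using Rats_0 by blast
  have Fs: "r \<in> \<rat> \<Longrightarrow> F r \<omega> \<le> s \<omega>" for r \<omega> unfolding s_def using bdd by (intro cSUP_upper) auto
  have sL: "L \<le> s \<omega>" for \<omega> using Fs[OF Rats_0, of \<omega>] unfolding F_def by (smt (verit))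
  have sK: "s \<omega> \<le> max L K" for \<omega> unfolding s_def using Rne Fle by (intro cSUP_least) auto
  have Fmeas: "F r \<in> borel_measurable M" for r
  proof -
    have [measurable]: "T r \<in> sets M" by (rule T(1))
    show ?thesis unfolding F_def by measurable
  qed
  have smeas: "s \<in> borel_measurable M" unfolding s_def
    by (rule borel_measurable_cSUP[OF countable_rat Fmeas bdd])
  have sLinf: "s \<in> Linf M \<P>" unfolding Linf_iff
  proof (intro conjI exI[where x="max \<bar>L\<bar> \<bar>K\<bar>"] smeas qs'_True)
    fix \<omega> show "\<bar>s \<omega>\<bar> \<le> max \<bar>L\<bar> \<bar>K\<bar>" using sL[of \<omega>] sK[of \<omega>] by auto
  qed
  have upper: "qs_le M \<P> f s" if f: "f \<in> A" for f
  proof -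
    have "qs' (\<lambda>\<omega>. \<omega> \<notin> {\<omega>\<in>space M. r < f \<omega>} - T r)" if "r \<in> \<rat>" for r
      using T(2)[of r] f unfolding \<E>_def qs'_def by auto
    then have "qs' (\<lambda>\<omega>. \<forall>r\<in>\<rat>. \<omega> \<notin> {\<omega>\<in>space M. r < f \<omega>} - T r)"
      by (intro qs'_ball countable_rat)
    then have "qs' (\<lambda>\<omega>. (\<forall>r\<in>\<rat>. \<omega> \<notin> {\<omega>\<in>space M. r < f \<omega>} - T r) \<and> f \<omega> \<le> u \<omega> \<and> \<bar>u \<omega>\<bar> \<le> cu)"
      using fu[OF f] cu by (intro qs'_conj)
    then show ?thesis unfolding qs_le_iff
    proof (rule qs'_mono)
      fix \<omega> assume om: "\<omega> \<in> space M"
        and h: "(\<forall>r\<in>\<rat>. \<omega> \<notin> {\<omega>\<in>space M. r < f \<omega>} - T r) \<and> f \<omega> \<le> u \<omega> \<and> \<bar>u \<omega>\<bar> \<le> cu"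
      show "f \<omega> \<le> s \<omega>"
      proof (rule ccontr)
        assume "\<not> f \<omega> \<le> s \<omega>"
        then obtain r where r: "r \<in> \<rat>" "s \<omega> < r" "r < f \<omega>" using Rats_dense_in_real by (meson not_le)
        then have "\<omega> \<in> T r" using h om by auto
        moreover have "r < K" using r h unfolding K_def by auto
        ultimately have "r \<le> F r \<omega>" unfolding F_def by auto
        with Fs[OF r(1), of \<omega>] r show False by auto
      qed
    qed
  qed
  have least: "qs_le M \<P> s u'" if u': "u' \<in> Linf M \<P>" "\<forall>f\<in>A. qs_le M \<P> f u'" for u'
  proof -
    have u'm: "u' \<in> borel_measurable M" using u' Linf_iff by blast
    have "qs' (\<lambda>\<omega>. \<omega> \<notin> T r - {\<omega>\<in>space M. r < u' \<omega>})" for r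
    proof -
      have Fset: "{\<omega>\<in>space M. r < u' \<omega>} \<in> sets M" using u'm by measurable
      have "qz (E - {\<omega>\<in>space M. r < u' \<omega>})" if E: "E \<in> \<E> r" for E
      proof -
        obtain f where f: "f \<in> A" "E = {\<omega>\<in>space M. r < f \<omega>}" using E unfolding \<E>_def by auto
        have fm: "f \<in> borel_measurable M" by (rule meas[OF f(1)])
        have "qs' (\<lambda>\<omega>. f \<omega> \<le> u' \<omega>)" using u'(2) f(1) qs_le_iff by blast
        then have "qs' (\<lambda>\<omega>. \<omega> \<notin> E - {\<omega>\<in>space M. r < u' \<omega>})"
          by (rule qs'_mono) (auto simp: f(2))
        moreover have "E - {\<omega>\<in>space M. r < u' \<omega>} \<in> sets M" unfolding f(2) using fm u'm by measurable
        ultimately show ?thesis using qz_set by blast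
      qed
      then have "qz (T r - {\<omega>\<in>space M. r < u' \<omega>})" using T(3)[of r] Fset by blast
      then show ?thesis unfolding qs'_def by auto
    qed
    then have "qs' (\<lambda>\<omega>. \<forall>r\<in>\<rat>. \<omega> \<notin> T r - {\<omega>\<in>space M. r < u' \<omega>})"
      by (intro qs'_ball countable_rat)
    moreover have "qs' (\<lambda>\<omega>. f0 \<omega> \<le> u' \<omega>)" using u'(2) f0 qs_le_iff by blast
    ultimately have "qs' (\<lambda>\<omega>. (\<forall>r\<in>\<rat>. \<omega> \<notin> T r - {\<omega>\<in>space M. r < u' \<omega>}) \<and> f0 \<omega> \<le> u' \<omega> \<and> \<bar>f0 \<omega>\<bar> \<le> c0)"
      using c0 by (intro qs'_conj)
    then show ?thesis unfolding qs_le_iff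
    proof (rule qs'_mono)
      fix \<omega> assume om: "\<omega> \<in> space M"
        and h: "(\<forall>r\<in>\<rat>. \<omega> \<notin> T r - {\<omega>\<in>space M. r < u' \<omega>}) \<and> f0 \<omega> \<le> u' \<omega> \<and> \<bar>f0 \<omega>\<bar> \<le> c0"
      have Lu: "L \<le> u' \<omega>" using h unfolding L_def by auto
      show "s \<omega> \<le> u' \<omega>"
      proof (rule ccontr)
        assume "\<not> s \<omega> \<le> u' \<omega>"
        then have "u' \<omega> < (SUP r\<in>\<rat>. F r \<omega>)" unfolding s_def by simp
        then obtain r where r: "r \<in> \<rat>" "u' \<omega> < F r \<omega>" using less_cSUP_iff[OF Rne bdd] by blast
        then have "\<omega> \<in> T r" using Lu unfolding F_def by (auto split: if_splits)
        then have "r < u' \<omega>" using h om r(1) by auto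
        moreover have "F r \<omega> \<le> max L r" unfolding F_def by auto
        ultimately show False using r(2) Lu by auto
      qed
    qed
  qed
  show "\<exists>s\<in>Linf M \<P>. (\<forall>f\<in>A. qs_le M \<P> f s) \<and>
           (\<forall>u\<in>Linf M \<P>. (\<forall>f\<in>A. qs_le M \<P> f u) \<longrightarrow> qs_le M \<P> s u)"
    using sLinf upper least by blast
qed

lemma S_inter_qz: "Q \<in> \<Q> \<Longrightarrow> R \<in> \<Q> \<Longrightarrow> Q \<noteq> R \<Longrightarrow> qz (S Q \<inter> S R)"
proof -
  assume Q: "Q \<in> \<Q>" and R: "R \<in> \<Q>" and QR: "Q \<noteq> R"
  have m: "S Q \<inter> S R \<in> sets M" using S_sets Q R by auto
  have "emeasure Q' (S Q \<inter> S R) = 0" if Q': "Q' \<in> \<Q>" for Q'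
  proof (cases "Q' = Q")
    case True
    have "emeasure Q' (S Q \<inter> S R) \<le> emeasure Q' (S R)"
      using m S_sets[OF R] Q_sets[OF Q'] by (intro emeasure_mono) auto
    then show ?thesis using S_other[OF Q' R] QR True by simp
  next
    case False
    have "emeasure Q' (S Q \<inter> S R) \<le> emeasure Q' (S Q)"
      using m S_sets[OF Q] Q_sets[OF Q'] by (intro emeasure_mono) auto
    then show ?thesis using S_other[OF Q' Q] False by simp
  qed
  then show ?thesis using m unfolding qz_def by auto
qed

lemma DC_HL:
  assumes DC: "Linf_dedekind_complete M \<P>"
  shows "hahn_localizable M \<P> \<Q> S"
  unfolding hahn_localizable_def
proof (intro conjI phl allI impI)
  fix E assume E: "\<forall>Q\<in>\<Q>. E Q \<in> sets M \<and> E Q \<subseteq> S Q"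
  define A :: "('a \<Rightarrow> real) set" where "A = insert (\<lambda>_. 0) ((\<lambda>Q. indicator (E Q)) ` \<Q>)"
  have ind_Linf: "indicator X \<in> Linf M \<P>" if "X \<in> sets M" for X
    unfolding Linf_iff
    by (intro conjI exI[where x=1] qs'_True borel_measurable_indicator that) (auto simp: indicator_def)
  have AL: "A \<subseteq> Linf M \<P>" unfolding A_def using E ind_Linf
    by (auto simp: Linf_iff intro!: qs'_True exI[where x=0])
  have one: "(\<lambda>_. 1) \<in> Linf M \<P>" unfolding Linf_iff by (auto intro!: qs'_True exI[where x=1])
  have "\<forall>f\<in>A. qs_le M \<P> f (\<lambda>_. 1)" unfolding A_def qs_le_iff
    by (auto intro!: qs'_True simp: indicator_def)
  then have H: "A \<subseteq> Linf M \<P> \<and> A \<noteq> {} \<and> (\<exists>u\<in>Linf M \<P>. \<forall>f\<in>A. qs_le M \<P> f u)"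
    using AL one unfolding A_def by blast
  have "\<exists>s\<in>Linf M \<P>. (\<forall>f\<in>A. qs_le M \<P> f s) \<and>
           (\<forall>u\<in>Linf M \<P>. (\<forall>f\<in>A. qs_le M \<P> f u) \<longrightarrow> qs_le M \<P> s u)"
    by (rule mp[OF spec[OF DC[unfolded Linf_dedekind_complete_def]] H])
  then obtain s where s: "s \<in> Linf M \<P>" "\<forall>f\<in>A. qs_le M \<P> f s"
     "\<forall>u\<in>Linf M \<P>. (\<forall>f\<in>A. qs_le M \<P> f u) \<longrightarrow> qs_le M \<P> s u"
    by blast
  have sm: "s \<in> borel_measurable M" using s(1) Linf_iff by blast
  define T where "T = {\<omega>\<in>space M. 1/2 \<le> s \<omega>}"
  have Tm: "T \<in> sets M" unfolding T_def using sm by measurable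
  show "\<exists>T\<in>sets M. (\<forall>Q\<in>\<Q>. emeasure Q (E Q - T) = 0) \<and>
           (\<forall>F\<in>sets M. (\<forall>Q\<in>\<Q>. emeasure Q (E Q - F) = 0) \<longrightarrow> (\<forall>Q\<in>\<Q>. emeasure Q (T - F) = 0))"
  proof (intro bexI[OF _ Tm] conjI ballI impI)
    fix Q assume Q: "Q \<in> \<Q>"
    have "qs' (\<lambda>\<omega>. indicator (E Q) \<omega> \<le> s \<omega>)" using s(2) Q qs_le_iff unfolding A_def by blast
    then have "qs' (\<lambda>\<omega>. \<omega> \<notin> E Q - T)" by (rule qs'_mono) (auto simp: T_def indicator_def)
    then have "qz (E Q - T)" using qz_set E Q Tm by blast
    then show "emeasure Q (E Q - T) = 0" using Q unfolding qz_def by auto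
  next
    fix F Q0 assume F: "F \<in> sets M" "\<forall>Q\<in>\<Q>. emeasure Q (E Q - F) = 0" and Q0: "Q0 \<in> \<Q>"
    have "qs_le M \<P> f (indicator F)" if f: "f \<in> A" for f
    proof -
      consider "f = (\<lambda>_. 0)" | R where "R \<in> \<Q>" "f = indicator (E R)" using f unfolding A_def by auto
      then show ?thesis
      proof cases
        case 1 then show ?thesis unfolding qs_le_iff by (auto intro!: qs'_True simp: indicator_def)
      next
        case 2
        have "emeasure Q (E R - F) = 0" if Q: "Q \<in> \<Q>" for Q
        proof (cases "Q = R")
          case False
          have "emeasure Q (E R - F) \<le> emeasure Q (S R)"
            using E F 2 S_sets Q_sets[OF Q] by (intro emeasure_mono) auto
          then show ?thesis using S_other[OF Q 2(1) False] by simp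
        qed (use F 2 in auto)
        then have "qz (E R - F)" using E F 2 unfolding qz_def by auto
        then have "qs' (\<lambda>\<omega>. \<omega> \<notin> E R - F)" unfolding qs'_def by auto
        then show ?thesis unfolding qs_le_iff 2 by (rule qs'_mono) (auto simp: indicator_def)
      qed
    qed
    then have "qs' (\<lambda>\<omega>. s \<omega> \<le> indicator F \<omega>)" using s(3) ind_Linf[OF F(1)] qs_le_iff by blast
    then have "qs' (\<lambda>\<omega>. \<omega> \<notin> T - F)" by (rule qs'_mono) (auto simp: T_def indicator_def of_bool_def split: if_splits)
    then have "qz (T - F)" using qz_set Tm F by blast
    then show "emeasure Q0 (T - F) = 0" using Q0 unfolding qz_def by auto
  qed
qed

lemma G_HL:
  assumes G: "(\<forall>g :: 'a measure \<Rightarrow> 'a \<Rightarrow> real.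
              (\<forall>Q\<in>\<Q>. g Q \<in> borel_measurable M \<and> (\<forall>\<omega>\<in>space M. 0 \<le> g Q \<omega>) \<and>
                  qs M \<P> (\<lambda>\<omega>. \<omega> \<notin> S Q \<longrightarrow> g Q \<omega> = 0)) \<and>
              (\<exists>c. \<forall>Q\<in>\<Q>. qs M \<P> (\<lambda>\<omega>. g Q \<omega> \<le> c)) \<longrightarrow>
              (\<exists>h\<in>Linf M \<P>. \<forall>Q\<in>\<Q>.
                  qs M \<P> (\<lambda>\<omega>. h \<omega> * indicator (S Q) \<omega> = g Q \<omega> * indicator (S Q) \<omega>)))"
  shows "hahn_localizable M \<P> \<Q> S"
  unfolding hahn_localizable_def
proof (intro conjI phl allI impI)
  fix E assume E: "\<forall>Q\<in>\<Q>. E Q \<in> sets M \<and> E Q \<subseteq> S Q"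
  define g :: "'a measure \<Rightarrow> 'a \<Rightarrow> real" where "g Q = indicator (E Q)" for Q
  have "\<forall>Q\<in>\<Q>. g Q \<in> borel_measurable M \<and> (\<forall>\<omega>\<in>space M. 0 \<le> g Q \<omega>) \<and>
                  qs M \<P> (\<lambda>\<omega>. \<omega> \<notin> S Q \<longrightarrow> g Q \<omega> = 0)"
    using E unfolding g_def qs_iff by (auto intro!: qs'_True borel_measurable_indicator simp: indicator_def)
  moreover have "\<forall>Q\<in>\<Q>. qs M \<P> (\<lambda>\<omega>. g Q \<omega> \<le> 1)"
    unfolding g_def qs_iff by (auto intro!: qs'_True simp: indicator_def)
  ultimately obtain h where h: "h \<in> Linf M \<P>"
    "\<forall>Q\<in>\<Q>. qs' (\<lambda>\<omega>. h \<omega> * indicator (S Q) \<omega> = g Q \<omega> * indicator (S Q) \<omega>)"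
    using G unfolding qs_iff by blast
  have hm: "h \<in> borel_measurable M" using h(1) Linf_iff by blast
  define T where "T = {\<omega>\<in>space M. 1/2 \<le> h \<omega>}"
  have Tm: "T \<in> sets M" unfolding T_def using hm by measurable
  show "\<exists>T\<in>sets M. (\<forall>Q\<in>\<Q>. emeasure Q (E Q - T) = 0) \<and>
           (\<forall>F\<in>sets M. (\<forall>Q\<in>\<Q>. emeasure Q (E Q - F) = 0) \<longrightarrow> (\<forall>Q\<in>\<Q>. emeasure Q (T - F) = 0))"
  proof (intro bexI[OF _ Tm] conjI ballI impI)
    fix Q assume Q: "Q \<in> \<Q>"
    have "qs' (\<lambda>\<omega>. h \<omega> * indicator (S Q) \<omega> = g Q \<omega> * indicator (S Q) \<omega>)" using h(2) Q by blast
    then have "qs' (\<lambda>\<omega>. \<omega> \<notin> E Q - T)"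
      by (rule qs'_mono) (use E Q in \<open>auto simp: T_def g_def indicator_def split: if_splits\<close>)
    then have "qz (E Q - T)" using qz_set E Q Tm by blast
    then show "emeasure Q (E Q - T) = 0" using Q unfolding qz_def by auto
  next
    fix F Q assume F: "F \<in> sets M" "\<forall>Q\<in>\<Q>. emeasure Q (E Q - F) = 0" and Q: "Q \<in> \<Q>"
    obtain N where N: "qz N" "\<forall>\<omega>\<in>space M. \<omega> \<notin> N \<longrightarrow> h \<omega> * indicator (S Q) \<omega> = g Q \<omega> * indicator (S Q) \<omega>"
      using h(2) Q unfolding qs'_def by blast
    have n1: "space M - S Q \<in> null_sets Q" by (rule compl_S_null[OF Q])
    have n2: "N \<in> null_sets Q" using qz_null N Q by auto
    have n3: "E Q - F \<in> null_sets Q" using F E Q null_iff[OF Q] by auto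
    have "T - F \<subseteq> (space M - S Q) \<union> N \<union> (E Q - F)"
    proof
      fix \<omega> assume w: "\<omega> \<in> T - F"
      show "\<omega> \<in> (space M - S Q) \<union> N \<union> (E Q - F)"
      proof (rule ccontr)
        assume "\<not> ?thesis"
        then have "\<omega> \<in> S Q" "\<omega> \<notin> N" "\<omega> \<notin> E Q - F" using w T_def by auto
        then have "h \<omega> = g Q \<omega>" using N(2) w T_def by auto
        then show False using w \<open>\<omega> \<notin> E Q - F\<close> by (auto simp: T_def g_def indicator_def split: if_splits)
      qed
    qed
    moreover have "T - F \<in> sets Q" using Tm F Q_sets[OF Q] by auto
    moreover have "(space M - S Q) \<union> N \<union> (E Q - F) \<in> null_sets Q" using n1 n2 n3 by auto
    ultimately have "T - F \<in> null_sets Q" using null_sets_subset by blast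
    then show "emeasure Q (T - F) = 0" by auto
  qed
qed

lemma DC_G:
  fixes g :: "'a measure \<Rightarrow> 'a \<Rightarrow> real"
  assumes DC: "Linf_dedekind_complete M \<P>"
    and hg: "\<forall>Q\<in>\<Q>. g Q \<in> borel_measurable M \<and> (\<forall>\<omega>\<in>space M. 0 \<le> g Q \<omega>) \<and>
                  qs M \<P> (\<lambda>\<omega>. \<omega> \<notin> S Q \<longrightarrow> g Q \<omega> = 0)"
    and hc: "\<exists>c. \<forall>Q\<in>\<Q>. qs M \<P> (\<lambda>\<omega>. g Q \<omega> \<le> c)"
  shows "\<exists>h\<in>Linf M \<P>. \<forall>Q\<in>\<Q>.
                  qs M \<P> (\<lambda>\<omega>. h \<omega> * indicator (S Q) \<omega> = g Q \<omega> * indicator (S Q) \<omega>)"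
proof -
  from hc obtain c where c: "\<forall>Q\<in>\<Q>. qs M \<P> (\<lambda>\<omega>. g Q \<omega> \<le> c)" by (elim exE)
  have gm: "\<And>Q. Q \<in> \<Q> \<Longrightarrow> g Q \<in> borel_measurable M" using hg by simp
  have gpos: "\<And>Q \<omega>. Q \<in> \<Q> \<Longrightarrow> \<omega> \<in> space M \<Longrightarrow> 0 \<le> g Q \<omega>" using hg by simp
  have gc: "\<And>Q. Q \<in> \<Q> \<Longrightarrow> qs' (\<lambda>\<omega>. g Q \<omega> \<le> c)" using c unfolding qs_iff by simp
  define f where "f Q \<omega> = g Q \<omega> * indicator (S Q) \<omega>" for Q \<omega>
  have fm: "f Q \<in> borel_measurable M" if "Q \<in> \<Q>" for Q
    unfolding f_def using gm[OF that] S_sets[OF that] by measurable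
  have fpos: "0 \<le> f Q \<omega>" if "Q \<in> \<Q>" "\<omega> \<in> space M" for Q \<omega> using gpos[OF that] by (simp add: f_def)
  have fc: "qs' (\<lambda>\<omega>. f Q \<omega> \<le> \<bar>c\<bar>)" if Q: "Q \<in> \<Q>" for Q
    using gc[OF Q] by (rule qs'_mono) (use gpos[OF Q] in \<open>auto simp: f_def indicator_def\<close>)
  define A :: "('a \<Rightarrow> real) set" where "A = insert (\<lambda>_. 0) (f ` \<Q>)"
  have AL: "A \<subseteq> Linf M \<P>"
  proof -
    have "(\<lambda>_. 0) \<in> Linf M \<P>" unfolding Linf_iff by (auto intro!: qs'_True exI[where x=0])
    moreover have "f Q \<in> Linf M \<P>" if Q: "Q \<in> \<Q>" for Q
    proof -
      have "qs' (\<lambda>\<omega>. \<bar>f Q \<omega>\<bar> \<le> \<bar>c\<bar>)" using fc[OF Q] by (rule qs'_mono) (use fpos[OF Q] in auto)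
      then show ?thesis unfolding Linf_iff using fm[OF Q] by blast
    qed
    ultimately show ?thesis unfolding A_def by auto
  qed
  have cL: "(\<lambda>_. \<bar>c\<bar>) \<in> Linf M \<P>" unfolding Linf_iff by (auto intro!: qs'_True exI[where x="\<bar>c\<bar>"])
  have "\<forall>f'\<in>A. qs_le M \<P> f' (\<lambda>_. \<bar>c\<bar>)" unfolding A_def qs_le_iff
    using fc by (auto intro!: qs'_True)
  then have H: "A \<subseteq> Linf M \<P> \<and> A \<noteq> {} \<and> (\<exists>u\<in>Linf M \<P>. \<forall>f\<in>A. qs_le M \<P> f u)"
    using AL cL unfolding A_def by blast
  have "\<exists>s\<in>Linf M \<P>. (\<forall>f\<in>A. qs_le M \<P> f s) \<and>
           (\<forall>u\<in>Linf M \<P>. (\<forall>f\<in>A. qs_le M \<P> f u) \<longrightarrow> qs_le M \<P> s u)"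
    by (rule mp[OF spec[OF DC[unfolded Linf_dedekind_complete_def]] H])
  then obtain s where s: "s \<in> Linf M \<P>" "\<forall>f'\<in>A. qs_le M \<P> f' s"
     "\<forall>u\<in>Linf M \<P>. (\<forall>f'\<in>A. qs_le M \<P> f' u) \<longrightarrow> qs_le M \<P> s u"
    by blast
  have sm: "s \<in> borel_measurable M" using s(1) Linf_iff by blast
  obtain cs where cs: "qs' (\<lambda>\<omega>. \<bar>s \<omega>\<bar> \<le> cs)" using s(1) Linf_iff by blast
  have s0: "qs' (\<lambda>\<omega>. 0 \<le> s \<omega>)" using s(2) unfolding A_def qs_le_iff by auto
  have fs: "qs' (\<lambda>\<omega>. f Q \<omega> \<le> s \<omega>)" if "Q \<in> \<Q>" for Q using s(2) that unfolding A_def qs_le_iff by auto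
  have "qs M \<P> (\<lambda>\<omega>. s \<omega> * indicator (S Q) \<omega> = g Q \<omega> * indicator (S Q) \<omega>)" if Q: "Q \<in> \<Q>" for Q
  proof -
    define u where "u \<omega> = (if \<omega> \<in> S Q then g Q \<omega> else s \<omega>)" for \<omega>
    have um: "u \<in> borel_measurable M"
    proof -
      have [measurable]: "S Q \<in> sets M" "g Q \<in> borel_measurable M" "s \<in> borel_measurable M"
        using S_sets[OF Q] gm[OF Q] sm by auto
      show ?thesis unfolding u_def by measurable
    qed
    have uL: "u \<in> Linf M \<P>" unfolding Linf_iff
    proof (intro conjI um exI[where x="max \<bar>c\<bar> cs"])
      show "qs' (\<lambda>\<omega>. \<bar>u \<omega>\<bar> \<le> max \<bar>c\<bar> cs)"
        using qs'_conj[OF gc[OF Q] cs] by (rule qs'_mono) (use gpos[OF Q] in \<open>auto simp: u_def\<close>)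
    qed
    have ub: "qs_le M \<P> f' u" if f': "f' \<in> A" for f'
    proof -
      consider "f' = (\<lambda>_. 0)" | R where "R \<in> \<Q>" "f' = f R" using f' unfolding A_def by auto
      then show ?thesis
      proof cases
        case 1
        show ?thesis unfolding qs_le_iff using s0 by (rule qs'_mono) (use gpos[OF Q] in \<open>auto simp: 1 u_def\<close>)
      next
        case 2
        show ?thesis
        proof (cases "R = Q")
          case True
          show ?thesis unfolding qs_le_iff using fs[OF Q] by (rule qs'_mono) (auto simp: 2 True u_def f_def)
        next
          case False
          have "qz (S Q \<inter> S R)" using S_inter_qz Q 2(1) False by auto
          then have "qs' (\<lambda>\<omega>. \<omega> \<notin> S Q \<inter> S R)" unfolding qs'_def by auto
          then have "qs' (\<lambda>\<omega>. f R \<omega> \<le> s \<omega> \<and> 0 \<le> s \<omega> \<and> \<omega> \<notin> S Q \<inter> S R)"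
            using fs[OF 2(1)] s0 by (intro qs'_conj)
          then show ?thesis unfolding qs_le_iff 2
          proof (rule qs'_mono)
            fix \<omega> assume om: "\<omega> \<in> space M" and h: "f R \<omega> \<le> s \<omega> \<and> 0 \<le> s \<omega> \<and> \<omega> \<notin> S Q \<inter> S R"
            show "f R \<omega> \<le> u \<omega>"
            proof (cases "\<omega> \<in> S Q")
              case True
              then have "\<omega> \<notin> S R" using h by auto
              then have "f R \<omega> = 0" by (simp add: f_def)
              then show ?thesis using True gpos[OF Q om] by (simp add: u_def)
            next
              case False
              then show ?thesis using h by (simp add: u_def)
            qed
          qed
        qed
      qed
    qed
    have "qs' (\<lambda>\<omega>. s \<omega> \<le> u \<omega>)" using s(3) uL ub qs_le_iff by blast
    then have "qs' (\<lambda>\<omega>. s \<omega> \<le> u \<omega> \<and> f Q \<omega> \<le> s \<omega>)" using fs[OF Q] by (rule qs'_conj)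
    then show ?thesis unfolding qs_iff
    proof (rule qs'_mono)
      fix \<omega> assume h: "s \<omega> \<le> u \<omega> \<and> f Q \<omega> \<le> s \<omega>"
      show "s \<omega> * indicator (S Q) \<omega> = g Q \<omega> * indicator (S Q) \<omega>"
      proof (cases "\<omega> \<in> S Q")
        case True
        then have "s \<omega> = g Q \<omega>" using h by (simp add: u_def f_def)
        then show ?thesis by simp
      qed simp
    qed
  qed
  then show ?thesis using s(1) by blast
qed

end

theorem proposition3p3:
  fixes M :: "'a measure" and \<P> \<Q> :: "'a measure set" and S :: "'a measure \<Rightarrow> 'a set"
  assumes probs: "\<forall>P\<in>\<P>. prob_on M P"
    and sc: "sigma_convex M \<P>"
    and phl: "pre_hahn_localizable M \<P> \<Q> S"
  shows "(hahn_localizable M \<P> \<Q> S \<longleftrightarrow> Linf_dedekind_complete M \<P>) \<and>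
         (Linf_dedekind_complete M \<P> \<longleftrightarrow>
           (\<forall>g :: 'a measure \<Rightarrow> 'a \<Rightarrow> real.
              (\<forall>Q\<in>\<Q>. g Q \<in> borel_measurable M \<and> (\<forall>\<omega>\<in>space M. 0 \<le> g Q \<omega>) \<and>
                  qs M \<P> (\<lambda>\<omega>. \<omega> \<notin> S Q \<longrightarrow> g Q \<omega> = 0)) \<and>
              (\<exists>c. \<forall>Q\<in>\<Q>. qs M \<P> (\<lambda>\<omega>. g Q \<omega> \<le> c)) \<longrightarrow>
              (\<exists>h\<in>Linf M \<P>. \<forall>Q\<in>\<Q>.
                  qs M \<P> (\<lambda>\<omega>. h \<omega> * indicator (S Q) \<omega> = g Q \<omega> * indicator (S Q) \<omega>))))"
proof -
  interpret setting M \<P> \<Q> S using probs phl by unfold_locales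
  have 1: "hahn_localizable M \<P> \<Q> S \<longleftrightarrow> Linf_dedekind_complete M \<P>"
    using HL_DC DC_HL by blast
  have 2: "Linf_dedekind_complete M \<P> \<Longrightarrow> (\<forall>g :: 'a measure \<Rightarrow> 'a \<Rightarrow> real.
              (\<forall>Q\<in>\<Q>. g Q \<in> borel_measurable M \<and> (\<forall>\<omega>\<in>space M. 0 \<le> g Q \<omega>) \<and>
                  qs M \<P> (\<lambda>\<omega>. \<omega> \<notin> S Q \<longrightarrow> g Q \<omega> = 0)) \<and>
              (\<exists>c. \<forall>Q\<in>\<Q>. qs M \<P> (\<lambda>\<omega>. g Q \<omega> \<le> c)) \<longrightarrow>
              (\<exists>h\<in>Linf M \<P>. \<forall>Q\<in>\<Q>.
                  qs M \<P> (\<lambda>\<omega>. h \<omega> * indicator (S Q) \<omega> = g Q \<omega> * indicator (S Q) \<omega>)))"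
    by (intro allI impI, elim conjE) (rule DC_G)
  show ?thesis using 1 2 HL_DC G_HL by blast
qed

end
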